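(* Let $G$ be a graph with a type-2A 1-planar drawing $D$, let $S$ be a vertex-cut of $G$, let $F$ be a component of $G-S$, and let $ab$ be an edge of $F$. If $ab$ is crossed by an edge $xy$ in $D$, then one of the following holds: (a) $x,y\in S$; (b) $x,y\in V(F)$; (c) one of $x,y$ lies in $S$ and the other lies in $V(F)$.
   Context: All drawings are good (no edge crosses itself, two edges cross at most once, adjacent edges do not cross). A drawing is 1-planar if every edge is crossed at most once. If edges $ab$ and $cd$ cross in a 1-planar drawing of $G$, the associated edges of this crossing are the edges of $G[\{a,b,c,d\}]$ other than $ab$ and $cd$. A 1-planar drawing is type-2A if every crossing has at least two associated edges, and every crossing with exactly two associated edges has these two edges disjoint. A vertex-cut is a set $S\subseteq V(G)$ with $G-S$ disconnected. *)

theory Defs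
  imports "HOL-Analysis.Analysis"
begin

definition graph :: "'v set \<Rightarrow> 'v set set \<Rightarrow> bool" where
  "graph V E \<longleftrightarrow> finite V \<and>
     (\<forall>e\<in>E. \<exists>u v. u \<noteq> v \<and> u \<in> V \<and> v \<in> V \<and> e = {u, v})"

definition drawing :: "'v set \<Rightarrow> 'v set set \<Rightarrow> ('v \<Rightarrow> complex) \<Rightarrow> ('v set \<Rightarrow> real \<Rightarrow> complex) \<Rightarrow> bool" where
  "drawing V E pos \<Gamma> \<longleftrightarrow> inj_on pos V \<and>
     (\<forall>e\<in>E. arc (\<Gamma> e) \<and> pos ` e = {pathstart (\<Gamma> e), pathfinish (\<Gamma> e)} \<and>
        (\<forall>w\<in>V. pos w \<in> path_image (\<Gamma> e) \<longrightarrow> w \<in> e))"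

definition edge_interior :: "('v set \<Rightarrow> real \<Rightarrow> complex) \<Rightarrow> 'v set \<Rightarrow> complex set" where
  "edge_interior \<Gamma> e = path_image (\<Gamma> e) - {pathstart (\<Gamma> e), pathfinish (\<Gamma> e)}"

definition crossing_points :: "('v set \<Rightarrow> real \<Rightarrow> complex) \<Rightarrow> 'v set \<Rightarrow> 'v set \<Rightarrow> complex set" where
  "crossing_points \<Gamma> e f = edge_interior \<Gamma> e \<inter> edge_interior \<Gamma> f"

definition crosses :: "('v set \<Rightarrow> real \<Rightarrow> complex) \<Rightarrow> 'v set \<Rightarrow> 'v set \<Rightarrow> bool" where
  "crosses \<Gamma> e f \<longleftrightarrow> e \<noteq> f \<and> crossing_points \<Gamma> e f \<noteq> {}"

text \<open>Good drawing: no self-crossings (automatic for arcs), two edges cross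
  at most once, adjacent edges do not cross.\<close>
definition good_drawing :: "'v set \<Rightarrow> 'v set set \<Rightarrow> ('v \<Rightarrow> complex) \<Rightarrow> ('v set \<Rightarrow> real \<Rightarrow> complex) \<Rightarrow> bool" where
  "good_drawing V E pos \<Gamma> \<longleftrightarrow> drawing V E pos \<Gamma> \<and>
     (\<forall>e\<in>E. \<forall>f\<in>E. e \<noteq> f \<longrightarrow> finite (crossing_points \<Gamma> e f) \<and> card (crossing_points \<Gamma> e f) \<le> 1) \<and>
     (\<forall>e\<in>E. \<forall>f\<in>E. e \<noteq> f \<longrightarrow> e \<inter> f \<noteq> {} \<longrightarrow> \<not> crosses \<Gamma> e f)"

definition one_planar_drawing :: "'v set \<Rightarrow> 'v set set \<Rightarrow> ('v \<Rightarrow> complex) \<Rightarrow> ('v set \<Rightarrow> real \<Rightarrow> complex) \<Rightarrow> bool" where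
  "one_planar_drawing V E pos \<Gamma> \<longleftrightarrow> good_drawing V E pos \<Gamma> \<and>
     (\<forall>e\<in>E. card {f\<in>E. crosses \<Gamma> e f} \<le> 1)"

definition associated_edges :: "'v set set \<Rightarrow> 'v set \<Rightarrow> 'v set \<Rightarrow> 'v set set" where
  "associated_edges E e f = {g\<in>E. g \<subseteq> e \<union> f} - {e, f}"

definition type_2A :: "'v set \<Rightarrow> 'v set set \<Rightarrow> ('v \<Rightarrow> complex) \<Rightarrow> ('v set \<Rightarrow> real \<Rightarrow> complex) \<Rightarrow> bool" where
  "type_2A V E pos \<Gamma> \<longleftrightarrow> one_planar_drawing V E pos \<Gamma> \<and>
     (\<forall>e\<in>E. \<forall>f\<in>E. crosses \<Gamma> e f \<longrightarrow>
        card (associated_edges E e f) \<ge> 2 \<and>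
        (card (associated_edges E e f) = 2 \<longrightarrow>
          (\<forall>g\<in>associated_edges E e f. \<forall>h\<in>associated_edges E e f. g \<noteq> h \<longrightarrow> g \<inter> h = {})))"

definition reach_minus :: "'v set \<Rightarrow> 'v set set \<Rightarrow> 'v set \<Rightarrow> 'v \<Rightarrow> 'v \<Rightarrow> bool" where
  "reach_minus V E S = (\<lambda>u v. u \<in> V - S \<and> v \<in> V - S \<and> {u, v} \<in> E)\<^sup>*\<^sup>*"

definition vertex_cut :: "'v set \<Rightarrow> 'v set set \<Rightarrow> 'v set \<Rightarrow> bool" where
  "vertex_cut V E S \<longleftrightarrow> S \<subseteq> V \<and>
     (\<exists>u\<in>V - S. \<exists>v\<in>V - S. \<not> reach_minus V E S u v)"

definition component_minus :: "'v set \<Rightarrow> 'v set set \<Rightarrow> 'v set \<Rightarrow> 'v set \<Rightarrow> bool" where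
  "component_minus V E S F \<longleftrightarrow> (\<exists>v\<in>V - S. F = {w. reach_minus V E S v w})"

end

theory Submission
  imports Defs
begin

lemma reach_in:
  assumes "reach_minus V E S u w" shows "u = w \<or> w \<in> V - S"
  using assms unfolding reach_minus_def
  by (induction rule: rtranclp_induct) auto

lemma key:
  fixes V :: "'v set" and E :: "'v set set" and pos :: "'v \<Rightarrow> complex"
    and \<Gamma> :: "'v set \<Rightarrow> real \<Rightarrow> complex" and S F :: "'v set" and a b x y :: 'v
  assumes g: "graph V E"
    and t: "type_2A V E pos \<Gamma>"
    and c: "component_minus V E S F"
    and "a \<in> F" and "b \<in> F" and ab: "{a, b} \<in> E"
    and xy: "{x, y} \<in> E"
    and cr: "crosses \<Gamma> {a, b} {x, y}"
    and xS: "x \<notin> S" and xF: "x \<notin> F"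
  shows False
proof -
  obtain v where v: "v \<in> V - S" and F: "F = {w. reach_minus V E S v w}"
    using c unfolding component_minus_def by blast
  have aV: "a \<in> V - S" using reach_in[of V E S v a] \<open>a \<in> F\<close> F v by auto
  have bV: "b \<in> V - S" using reach_in[of V E S v b] \<open>b \<in> F\<close> F v by auto
  have xV: "x \<in> V" using g xy unfolding graph_def by (auto simp: doubleton_eq_iff)
  have ra: "reach_minus V E S v a" using \<open>a \<in> F\<close> F by auto
  have rb: "reach_minus V E S v b" using \<open>b \<in> F\<close> F by auto
  have nax: "{a, x} \<notin> E"
  proof
    assume "{a, x} \<in> E"
    then have st: "(\<lambda>u v. u \<in> V - S \<and> v \<in> V - S \<and> {u, v} \<in> E) a x" using aV xV xS by simp
    have "reach_minus V E S v x" unfolding reach_minus_def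
      using rtranclp.rtrancl_into_rtrancl[OF ra[unfolded reach_minus_def] st] .
    then show False using xF F by auto
  qed
  have nbx: "{b, x} \<notin> E"
  proof
    assume "{b, x} \<in> E"
    then have st: "(\<lambda>u v. u \<in> V - S \<and> v \<in> V - S \<and> {u, v} \<in> E) b x" using bV xV xS by simp
    have "reach_minus V E S v x" unfolding reach_minus_def
      using rtranclp.rtrancl_into_rtrancl[OF rb[unfolded reach_minus_def] st] .
    then show False using xF F by auto
  qed
  have gd: "good_drawing V E pos \<Gamma>" using t unfolding type_2A_def one_planar_drawing_def by auto
  have disj: "{a, b} \<inter> {x, y} = {}"
  proof -
    have ng: "\<forall>e\<in>E. \<forall>f\<in>E. e \<noteq> f \<longrightarrow> e \<inter> f \<noteq> {} \<longrightarrow> \<not> crosses \<Gamma> e f"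
      using gd unfolding good_drawing_def by (elim conjE)
    have neq: "{a, b} \<noteq> {x, y}" using cr unfolding crosses_def by (elim conjE)
    show ?thesis using ng[rule_format, OF ab xy neq] cr by blast
  qed
  have anb: "a \<noteq> b" using g ab unfolding graph_def by (auto simp: doubleton_eq_iff)
  have sub: "associated_edges E {a, b} {x, y} \<subseteq> {{a, y}, {b, y}}"
  proof
    fix h assume h: "h \<in> associated_edges E {a, b} {x, y}"
    then have hE: "h \<in> E" and hs: "h \<subseteq> {a, b} \<union> {x, y}" and hn: "h \<noteq> {a, b}" "h \<noteq> {x, y}"
      unfolding associated_edges_def by auto
    obtain u w where uw: "u \<noteq> w" "h = {u, w}" using g hE unfolding graph_def by blast
    have u: "u \<in> {a, b, x, y}" and w: "w \<in> {a, b, x, y}" using uw hs by auto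
    have xny: "x \<noteq> y" using g xy unfolding graph_def by (auto simp: doubleton_eq_iff)
    have d: "a \<noteq> x" "a \<noteq> y" "b \<noteq> x" "b \<noteq> y" using disj by auto
    show "h \<in> {{a, y}, {b, y}}"
    proof -
      have "h = {a,b} \<or> h = {a,x} \<or> h = {a,y} \<or> h = {b,x} \<or> h = {b,y} \<or> h = {x,y}"
        using u w uw(1) unfolding uw(2) by (auto simp: insert_commute)
      then show ?thesis using hn hE nax nbx by blast
    qed
  qed
  have cardle: "card (associated_edges E {a, b} {x, y}) \<ge> 2"
   and c2: "card (associated_edges E {a, b} {x, y}) = 2 \<longrightarrow>
          (\<forall>g\<in>associated_edges E {a, b} {x, y}. \<forall>h\<in>associated_edges E {a, b} {x, y}. g \<noteq> h \<longrightarrow> g \<inter> h = {})"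
    using t[unfolded type_2A_def, THEN conjunct2, rule_format, OF ab xy cr] by blast+
  have ne: "{a, y} \<noteq> {b, y}" using anb by (auto simp: doubleton_eq_iff)
  have fin: "card {{a, y}, {b, y}} = 2" using ne by simp
  have eq: "associated_edges E {a, b} {x, y} = {{a, y}, {b, y}}"
    using card_subset_eq[OF _ sub] fin cardle card_mono[OF _ sub] by (metis finite.emptyI finite.insertI le_antisym)
  show False using c2 eq fin ne by auto
qed

theorem proposition1:
  fixes V :: "'v set" and E :: "'v set set" and pos :: "'v \<Rightarrow> complex"
    and \<Gamma> :: "'v set \<Rightarrow> real \<Rightarrow> complex" and S F :: "'v set" and a b x y :: 'v
  assumes "graph V E"
    and "type_2A V E pos \<Gamma>"
    and "vertex_cut V E S"
    and "component_minus V E S F"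
    and "a \<in> F" and "b \<in> F" and "{a, b} \<in> E"
    and "{x, y} \<in> E"
    and "crosses \<Gamma> {a, b} {x, y}"
  shows "(x \<in> S \<and> y \<in> S) \<or> (x \<in> F \<and> y \<in> F) \<or>
         (x \<in> S \<and> y \<in> F) \<or> (x \<in> F \<and> y \<in> S)"
proof (rule ccontr)
  assume n: "\<not> ?thesis"
  have yx: "{y, x} \<in> E" "crosses \<Gamma> {a, b} {y, x}" using assms(8,9) by (auto simp: insert_commute)
  then show False
    using n key[OF assms(1,2,4,5,6,7,8,9)] key[OF assms(1,2,4,5,6,7) yx(1) yx(2)] by blast
qed

end
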